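(* Let $n\ge 3$ and let $T=(l_1,\dots,l_n)$, $l_1\le\cdots\le l_n$, be an impossibly burnable $n$-path forest of order $m^2$. If $B_m(l_i)\le 2$ for some $i$, then $l_1\le 12n-2\sqrt{30n-27}-8$. In particular, if $l_1=M_n$ then $B_m(l_i)\ge 3$ for every $i\in[n]$.
   Context: A path forest is a disjoint union of paths; an $n$-path forest is represented by the tuple $(l_1,\dots,l_n)$ of its path orders, with total order $\sum_i l_i=m^2$. For $m\in\mathbb{N}$ and an integer $1\le l\le m^2$, let $B_m(l)$ be the least positive integer $t$ with $t\equiv l\pmod 2$ such that $l\le 2mt-t^2$. An $n$-path forest of order $m^2$ is impossibly burnable if $\sum_{i=1}^n B_m(l_i)>m$. For $n\ge2$, $M_n$ denotes the maximum of $l_1$ over all impossibly burnable $n$-path forests. *)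

theory Defs
  imports Complex_Main
begin

definition Bm :: "nat \<Rightarrow> nat \<Rightarrow> nat" where
  "Bm m l = (LEAST t. t > 0 \<and> t mod 2 = l mod 2 \<and> int l \<le> 2 * int m * int t - (int t)^2)"

text \<open>An n-path forest of order N, given by the list of its path orders (each path has >= 1 vertex).\<close>
definition path_forest :: "nat \<Rightarrow> nat \<Rightarrow> nat list \<Rightarrow> bool" where
  "path_forest n N ls \<longleftrightarrow> length ls = n \<and> (\<forall>l\<in>set ls. 1 \<le> l) \<and> sum_list ls = N"

definition impossibly_burnable :: "nat \<Rightarrow> nat list \<Rightarrow> bool" where
  "impossibly_burnable m ls \<longleftrightarrow>
     path_forest (length ls) (m^2) ls \<and> sum_list (map (Bm m) ls) > m"

definition Mn :: "nat \<Rightarrow> nat" where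
  "Mn n = (GREATEST x. \<exists>m ls. length ls = n \<and> sorted ls \<and> impossibly_burnable m ls \<and> x = ls ! 0)"

end

theory Submission
  imports Defs
begin


lemma Bm_P:
  assumes m0: "0 < m" and lm: "l < m^2"
  shows "Bm m l > 0 \<and> Bm m l mod 2 = l mod 2 \<and> int l \<le> 2*int m*int (Bm m l) - (int (Bm m l))^2"
    and "Bm m l \<le> m + 1"
proof -
  define P where "P = (\<lambda>t. t > 0 \<and> t mod 2 = l mod 2 \<and> int l \<le> 2 * int m * int t - (int t)^2)"
  have ex: "\<exists>t. P t \<and> t \<le> m + 1"
  proof (cases "m mod 2 = l mod 2")
    case True
    have "int l < int m * int m" using lm by (metis of_nat_less_iff of_nat_mult power2_eq_square)
    then have "int l \<le> int m * int m" by simp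
    then have "int l \<le> 2 * int m * int m - (int m)^2" by (simp add: power2_eq_square)
    then show ?thesis using True m0 unfolding P_def by (intro exI[of _ m]) auto
  next
    case False
    then have "(m+1) mod 2 = l mod 2" by presburger
    moreover have "int l \<le> 2 * int m * int (m+1) - (int (m+1))^2"
    proof -
      have "int l < int m * int m" using lm by (metis of_nat_less_iff of_nat_mult power2_eq_square)
      then show ?thesis by (simp add: power2_eq_square algebra_simps)
    qed
    ultimately show ?thesis unfolding P_def by (intro exI[of _ "m+1"]) auto
  qed
  then obtain t0 where t0: "P t0" "t0 \<le> m+1" by blast
  have eq: "Bm m l = (LEAST t. P t)" unfolding Bm_def P_def by simp
  have "P (Bm m l)" unfolding eq using t0(1) by (rule LeastI)
  then show "Bm m l > 0 \<and> Bm m l mod 2 = l mod 2 \<and> int l \<le> 2*int m*int (Bm m l) - (int (Bm m l))^2"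
    unfolding P_def by blast
  have "(LEAST t. P t) \<le> t0" using t0(1) by (rule Least_le)
  then show "Bm m l \<le> m + 1" using t0(2) eq by linarith
qed

lemma evgap: assumes "even (a - b)" "a > b" shows "a \<ge> b + (2::int)"
proof -
  obtain k where "a - b = 2 * k" using assms(1) by blast
  moreover have "k > 0" using calculation assms(2) by linarith
  ultimately show ?thesis by linarith
qed

lemma Bm_lower:
  assumes m0: "0 < m" and lm: "l < m^2" and t3: "3 \<le> Bm m l"
  shows "int l \<ge> (int (Bm m l) - 2) * (2*int m - int (Bm m l) + 2) + 2"
proof -
  define t where "t = Bm m l"
  define P where "P = (\<lambda>t. t > 0 \<and> t mod 2 = l mod 2 \<and> int l \<le> 2 * int m * int t - (int t)^2)"
  have tdef: "t = (LEAST t. P t)" unfolding t_def Bm_def P_def by simp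
  have par: "t mod 2 = l mod 2" using Bm_P[OF m0 lm] unfolding t_def by simp
  have t3': "3 \<le> t" using t3 t_def by simp
  have "t - 2 < t" using t3' by simp
  then have "\<not> P (t - 2)" using tdef by (metis not_less_Least)
  moreover have "t - 2 > 0" using t3' by simp
  moreover have "(t - 2) mod 2 = l mod 2"
  proof -
    have "t = (t - 2) + 2" using t3' by simp
    then obtain u where u: "t = u + 2" by blast
    then have "(t - 2) mod 2 = t mod 2" by simp
    then show ?thesis using par by simp
  qed
  ultimately have lt: "int l > 2 * int m * int (t-2) - (int (t-2))^2" unfolding P_def by auto
  have it: "int (t-2) = int t - 2" using t3' by simp
  have ev1: "even (int l - int t)"
  proof -
    have "even l = even t" by (simp add: even_iff_mod_2_eq_zero par)
    then show ?thesis by simp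
  qed
  have ev2: "even (int t * (int t - 3))" by simp
  have "even (int l - (2 * int m * (int t - 2) - (int t - 2)^2) )"
  proof -
    have "int l - (2 * int m * (int t - 2) - (int t - 2)^2) = (int l - int t) + int t * (int t - 3) + 4 - 2 * (int m * (int t - 2))"
      by (simp add: power2_eq_square algebra_simps)
    then show ?thesis using ev1 ev2 by simp
  qed
  then have "int l \<ge> 2 * int m * (int t - 2) - (int t - 2)^2 + 2" using lt it evgap by simp
  then show ?thesis unfolding t_def[symmetric] by (simp add: power2_eq_square algebra_simps)
qed


lemma sqb: fixes A B r :: real assumes "0 \<le> A" "0 \<le> B" "0 \<le> r" "(B*r)^2 \<le> A^2" shows "B*r \<le> A"
  using assms by (meson power2_le_imp_le)

lemma realA: fixes n L :: real assumes n3: "n \<ge> 3" and h: "n*L \<le> (3*n-3)^2"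
  shows "L \<le> 12*n - 2*sqrt(30*n-27) - 8"
proof -
  define r where "r = sqrt(30*n-27)"
  have r0: "r \<ge> 0" unfolding r_def by (rule real_sqrt_ge_zero) (use n3 in linarith)
  have r2: "r^2 = 30*n-27" unfolding r_def by (rule real_sqrt_pow2) (use n3 in linarith)
  have "((2*n)*r)^2 \<le> (3*n^2+10*n-9)^2"
  proof -
    have "((2*n)*r)^2 = 4*n^2*(30*n-27)" using r2 by (simp add: power_mult_distrib)
    moreover have "(3*n^2+10*n-9)^2 - 4*n^2*(30*n-27) = (3*n^2-10*n+9)^2" by (simp add: power2_eq_square algebra_simps)
    ultimately show ?thesis by (smt (verit) zero_le_power2)
  qed
  moreover have "0 \<le> 3*n^2+10*n-9" using n3 zero_le_power2[of n] by linarith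
  ultimately have "(2*n)*r \<le> 3*n^2+10*n-9" using n3 r0 by (intro sqb) auto
  then have "n*L \<le> n*(12*n - 2*r - 8)" using h by (simp add: power2_eq_square algebra_simps)
  then show ?thesis using n3 unfolding r_def by simp
qed

lemma realB: fixes n L :: real assumes n3: "n \<ge> 3" and h: "(n-1)*L + 2 \<le> (3*n-4)^2"
  shows "L \<le> 12*n - 2*sqrt(30*n-27) - 8"
proof -
  define r where "r = sqrt(30*n-27)"
  have r0: "r \<ge> 0" unfolding r_def by (rule real_sqrt_ge_zero) (use n3 in linarith)
  have r2: "r^2 = 30*n-27" unfolding r_def by (rule real_sqrt_pow2) (use n3 in linarith)
  have "((2*(n-1))*r)^2 \<le> (3*n^2+4*n-6)^2"
  proof -
    have "((2*(n-1))*r)^2 = 4*(n-1)^2*r^2" by (simp only: power_mult_distrib) simp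
    then have "((2*(n-1))*r)^2 = 4*(n-1)^2*(30*n-27)" using r2 by simp
    moreover have "(3*n^2+4*n-6)^2 - 4*(n-1)^2*(30*n-27) = (3*n^2-16*n+12)^2" by (simp add: power2_eq_square algebra_simps)
    ultimately show ?thesis by (smt (verit) zero_le_power2)
  qed
  moreover have "0 \<le> 3*n^2+4*n-6" using n3 zero_le_power2[of n] by linarith
  ultimately have "(2*(n-1))*r \<le> 3*n^2+4*n-6" using n3 r0 by (intro sqb) auto
  then have "(n-1)*L \<le> (n-1)*(12*n - 2*r - 8)" using h by (simp add: power2_eq_square algebra_simps)
  then show ?thesis using n3 unfolding r_def by simp
qed

lemma realC: fixes n L c :: real assumes n3: "n \<ge> 3" and c1: "c \<ge> 1"
  and h: "c*L \<le> 12*n*c - 8*c - 3*c^2 - 10*n + 9"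
  shows "L \<le> 12*n - 2*sqrt(30*n-27) - 8"
proof -
  define r where "r = sqrt(30*n-27)"
  have r0: "r \<ge> 0" unfolding r_def by (rule real_sqrt_ge_zero) (use n3 in linarith)
  have r2: "r^2 = 30*n-27" unfolding r_def by (rule real_sqrt_pow2) (use n3 in linarith)
  have "0 \<le> (3*c - r)^2" by simp
  then have "6*c*r \<le> 9*c^2 + 30*n - 27" using r2 by (simp add: power2_eq_square algebra_simps)
  then have "c*L \<le> c*(12*n - 2*r - 8)" using h by (simp add: power2_eq_square algebra_simps)
  then show ?thesis using c1 unfolding r_def by simp
qed

lemma realW: fixes n a :: real assumes a2: "a \<ge> 2" and lo: "a^2 \<le> 2*n" and hi: "2*n \<le> a^2 + 2*a"
  shows "3*a^2 + 6*n - 4 \<le> 2*a*sqrt(30*n-27)"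
proof -
  define r where "r = sqrt(30*n-27)"
  have a4: "a^2 \<ge> 4" using a2 mult_mono[OF a2 a2] by (simp add: power2_eq_square)
  have n3: "30*n - 27 \<ge> 0" using lo a4 by linarith
  have r0: "r \<ge> 0" unfolding r_def by (rule real_sqrt_ge_zero) (use n3 in linarith)
  have r2: "r^2 = 30*n-27" unfolding r_def by (rule real_sqrt_pow2) (use n3 in linarith)
  define e where "e = 2*n - a^2"
  have e0: "0 \<le> e" "e \<le> 2*a" using lo hi unfolding e_def by auto
  have "(3*a^2 + 6*n - 4)^2 \<le> (2*a*r)^2"
  proof -
    have "(2*a*r)^2 = 4*a^2*(30*n-27)" using r2 by (simp add: power_mult_distrib)
    moreover have "30*n = 15*a^2 + 15*e" "6*n = 3*a^2 + 3*e" unfolding e_def by simp_all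
    moreover have "4*a^2*(15*a^2 + 15*e - 27) - (6*a^2 + 3*e - 4)^2 \<ge> 0"
    proof -
      have id: "4*a^2*(15*a^2 + 15*e - 27) - (6*a^2 + 3*e - 4)^2 = 24*(a^2*a^2) + 24*(a^2*e) - 60*a^2 - 9*(e*e) + 24*e - 16"
        by (simp add: power2_eq_square algebra_simps)
      have "9*(e*e) \<le> 18*(a*e)" using e0 mult_right_mono[OF e0(2) e0(1)] by (simp add: algebra_simps)
      moreover have "a*e \<le> a^2*e" using e0 a2 mult_right_mono[of a "a^2" e] a4
        by (simp add: power2_eq_square)
      moreover have "a^2*a^2 \<ge> 4*a^2" using a4 mult_right_mono[OF a4, of "a^2"] by simp
      moreover have "0 \<le> a^2*e" using e0 by simp
      ultimately show ?thesis unfolding id using e0 a4 by linarith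
    qed
    ultimately show ?thesis by (smt (verit))
  qed
  moreover have "0 \<le> 2*a*r" using a2 r0 by simp
  ultimately show ?thesis unfolding r_def[symmetric] by (rule power2_le_imp_le)
qed



lemma argmax_idx:
  fixes t :: "nat \<Rightarrow> int" assumes "N > 0"
  obtains p where "p < N" "\<forall>i<N. t i \<le> t p"
proof -
  have fin: "finite (t ` {..<N})" and ne: "t ` {..<N} \<noteq> {}" using assms by auto
  have "Max (t ` {..<N}) \<in> t ` {..<N}" using Max_in[OF fin ne] .
  then obtain p where p: "p < N" "t p = Max (t ` {..<N})" by auto
  have "\<forall>i<N. t i \<le> t p" using p(2) Max_ge[OF fin] by auto
  then show ?thesis using p(1) that by blast
qed

lemma sum_remove_lb:
  fixes l :: "nat \<Rightarrow> int" assumes "p < N" "\<forall>i<N. L \<le> l i"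
  shows "(\<Sum>i<N. l i) \<ge> l p + (int N - 1) * L"
proof -
  have "(\<Sum>i<N. l i) = l p + (\<Sum>i\<in>{..<N}-{p}. l i)" using assms(1) by (simp add: sum.remove)
  moreover have "(\<Sum>i\<in>{..<N}-{p}. l i) \<ge> (\<Sum>i\<in>{..<N}-{p}. L)" using assms(2) by (intro sum_mono) auto
  moreover have "(\<Sum>i\<in>{..<N}-{p}. L) = (int N - 1) * L" using assms(1) by (simp add: of_nat_diff)
  ultimately show ?thesis by linarith
qed

lemma core1:
  fixes n m L :: int and l t :: "nat \<Rightarrow> int" and N j0 :: nat
  assumes nN: "n = int N" and n3: "n \<ge> 3"
  and lge: "\<forall>i<N. L \<le> l i" and L1: "L \<ge> 1"
  and suml: "(\<Sum>i<N. l i) = m^2"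
  and sumt: "(\<Sum>i<N. t i) \<ge> m + 2"
  and tmax: "\<forall>i<N. t i \<le> m + 1"
  and tlow: "\<forall>i<N. 3 \<le> t i \<longrightarrow> l i \<ge> (t i - 2) * (2*m - t i + 2) + 2"
  and j0: "j0 < N" "t j0 \<le> 2"
  and L4: "L \<le> 4*m - 4"
  shows "real_of_int L \<le> 12 * real_of_int n - 2 * sqrt (30 * real_of_int n - 27) - 8"
proof -
  have N0: "N > 0" using nN n3 by simp
  obtain p where p: "p < N" "\<forall>i<N. t i \<le> t p" using argmax_idx[OF N0] by blast
  define T where "T = t p"
  have m2: "m \<ge> 2" using L4 L1 by linarith
  have sumL: "(\<Sum>i<N. l i) \<ge> n * L"
  proof -
    have "(\<Sum>i<N. l i) \<ge> (\<Sum>i<N. L)" using lge by (intro sum_mono) auto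
    then show ?thesis using nN by simp
  qed
  show ?thesis
  proof (cases "m + 3 - 3*n \<le> 0")
    case True
    have "m^2 \<le> (3*n-3)^2" using True m2 by (intro power_mono) auto
    then have "n * L \<le> (3*n-3)^2" using sumL suml by linarith
    then have "real_of_int n * real_of_int L \<le> (3*real_of_int n-3)^2"
      by (metis (mono_tags, opaque_lifting) of_int_le_iff of_int_mult of_int_power of_int_diff of_int_numeral)
    then show ?thesis using realA n3 by simp
  next
    case False
    have T4: "T \<ge> 4"
    proof (rule ccontr)
      assume "\<not> T \<ge> 4"
      then have "\<forall>i<N. t i \<le> 3 - (if i = j0 then 1 else 0)" using p j0 unfolding T_def by force
      then have "(\<Sum>i<N. t i) \<le> (\<Sum>i<N. 3 - (if i = j0 then 1 else 0))" by (intro sum_mono) auto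
      also have "\<dots> = 3*n - 1" using j0 nN by (simp add: sum_subtractf)
      finally show False using sumt False by linarith
    qed
    define s where "s = 2*m - T"
    define D where "D = 4*m - 2 - L"
    define q where "q = m + 2 - T"
    have Tm: "T \<le> m + 1" using tmax p unfolding T_def by auto
    have q1: "q \<ge> 1" using Tm unfolding q_def by simp
    have s0: "s \<ge> m - 1" using Tm unfolding s_def by simp
    have D0: "D \<ge> 2" using L4 unfolding D_def by simp
    have hb: "q^2 \<ge> (n-1)*L + 2"
    proof -
      have "l p \<ge> (T - 2) * (2*m - T + 2) + 2" using tlow p T4 unfolding T_def by auto
      moreover have "(T - 2) * (2*m - T + 2) = m^2 - q^2" unfolding q_def by (simp add: power2_eq_square algebra_simps)
      moreover have "(\<Sum>i<N. l i) \<ge> l p + (n - 1) * L" using sum_remove_lb[OF p(1) lge] nN by simp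
      ultimately show ?thesis using suml by linarith
    qed
    have pj: "p \<noteq> j0" using T4 j0 unfolding T_def by auto
    show ?thesis
    proof (cases "s \<ge> D")
      case sD: True
      show ?thesis
      proof (cases "m + 3 - 3*n \<le> n - 1")
        case True
        have per: "\<forall>i<N. l i \<ge> (L - 3*D) + D * t i + (if i = j0 then D else 0)"
        proof (intro allI impI)
          fix i assume i: "i < N"
          show "l i \<ge> (L - 3*D) + D * t i + (if i = j0 then D else 0)"
          proof (cases "i = j0")
            case True
            have "D * t i \<le> D * 2" using j0 True D0 by (intro mult_left_mono) auto
            then show ?thesis using True lge i by auto
          next
            case ij: False
            show ?thesis
            proof (cases "t i \<ge> 4")
              case True
              have g: "l i \<ge> (t i - 2) * (2*m - t i + 2) + 2" using tlow i True by auto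
              have ti: "t i \<le> T" using p i unfolding T_def by auto
              have "0 \<le> (t i - 4) * (2*m - t i - D)" using True ti sD unfolding s_def by (intro mult_nonneg_nonneg) auto
              moreover have "(t i - 2) * (2*m - t i + 2) + 2 - ((L - 3*D) + D * t i) = (t i - 4) * (2*m - t i - D)"
                unfolding D_def by (simp add: algebra_simps)
              ultimately show ?thesis using g ij by simp
            next
              case False
              have "D * t i \<le> D * 3" using False D0 by (intro mult_left_mono) auto
              then show ?thesis using ij lge i by auto
            qed
          qed
        qed
        have "(\<Sum>i<N. l i) \<ge> (\<Sum>i<N. (L - 3*D) + D * t i + (if i = j0 then D else 0))"
          using per by (intro sum_mono) auto
        also have "(\<Sum>i<N. (L - 3*D) + D * t i + (if i = j0 then D else 0)) = n*(L - 3*D) + D * (\<Sum>i<N. t i) + D"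
          using j0 nN by (simp add: sum.distrib sum_distrib_left)
        finally have "m^2 \<ge> n*(L - 3*D) + D * (\<Sum>i<N. t i) + D" using suml by simp
        moreover have "D * (\<Sum>i<N. t i) \<ge> D * (m + 2)" using sumt D0 by (intro mult_left_mono) auto
        ultimately have h: "m^2 \<ge> n*L + D*(m + 3 - 3*n)" by (simp add: algebra_simps)
        define c where "c = 4*n - 3 - m"
        have c1: "c \<ge> 1" using True unfolding c_def by simp
        have "c * L \<le> 12*n*c - 8*c - 3*c^2 - 10*n + 9"
        proof -
          have mc: "m = 4*n - 3 - c" unfolding c_def by simp
          have "m^2 - n*L - D*(m + 3 - 3*n) = 12*n*c - 8*c - 3*c^2 - 10*n + 9 - c*L"
            unfolding D_def mc by (simp add: power2_eq_square algebra_simps)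
          then show ?thesis using h by linarith
        qed
        then have "real_of_int c * real_of_int L \<le> 12*real_of_int n*real_of_int c - 8*real_of_int c - 3*(real_of_int c)^2 - 10*real_of_int n + 9"
          by (metis (mono_tags, opaque_lifting) of_int_le_iff of_int_mult of_int_power of_int_diff of_int_numeral of_int_add)
        then show ?thesis using realC[of "real_of_int n" "real_of_int c" "real_of_int L"] n3 c1 by simp
      next
        case False
        have per: "\<forall>i<N. l i \<ge> (L + D - 4*s) + s * t i + (if i = j0 then s else 0)"
        proof (intro allI impI)
          fix i assume i: "i < N"
          show "l i \<ge> (L + D - 4*s) + s * t i + (if i = j0 then s else 0)"
          proof (cases "i = j0")
            case True
            have "s * t i \<le> s * 2" using j0 True s0 m2 by (intro mult_left_mono) auto
            then show ?thesis using True lge i sD by auto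
          next
            case ij: False
            show ?thesis
            proof (cases "t i \<ge> 4")
              case True
              have g: "l i \<ge> (t i - 2) * (2*m - t i + 2) + 2" using tlow i True by auto
              have ti: "t i \<le> T" using p i unfolding T_def by auto
              have "0 \<le> (t i - 4) * (T - t i)" using True ti by (intro mult_nonneg_nonneg) auto
              moreover have "(t i - 2) * (2*m - t i + 2) + 2 - ((L + D - 4*s) + s * t i) = (t i - 4) * (T - t i)"
                unfolding D_def s_def by (simp add: algebra_simps)
              ultimately show ?thesis using g ij by simp
            next
              case False
              have "s * t i \<le> s * 3" using False s0 m2 by (intro mult_left_mono) auto
              then show ?thesis using ij lge i sD by auto
            qed
          qed
        qed
        have "(\<Sum>i<N. l i) \<ge> (\<Sum>i<N. (L + D - 4*s) + s * t i + (if i = j0 then s else 0))"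
          using per by (intro sum_mono) auto
        also have "(\<Sum>i<N. (L + D - 4*s) + s * t i + (if i = j0 then s else 0)) = n*(L + D - 4*s) + s * (\<Sum>i<N. t i) + s"
          using j0 nN by (simp add: sum.distrib sum_distrib_left)
        finally have "m^2 \<ge> n*(L + D - 4*s) + s * (\<Sum>i<N. t i) + s" using suml by simp
        moreover have "s * (\<Sum>i<N. t i) \<ge> s * (m + 2)" using sumt s0 m2 by (intro mult_left_mono) auto
        ultimately have h: "m^2 \<ge> n*(L+D) + s*(m + 3 - 4*n)" by (simp add: algebra_simps)
        have "s*(m + 3 - 4*n) \<ge> (m - 1)*(m + 3 - 4*n)" using False s0 by (intro mult_right_mono) auto
        then have "m^2 \<ge> n*(4*m-2) + (m - 1)*(m + 3 - 4*n)" using h unfolding D_def by (simp add: algebra_simps)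
        then have "0 \<ge> 2*m + 2*n - 3" by (simp add: power2_eq_square algebra_simps)
        then show ?thesis using m2 n3 by linarith
      qed
    next
      case sD: False
      have per: "\<forall>i<N. l i \<ge> (L - 3*s) + s * t i + (if i = j0 then s else 0) + (if i = p then D - s else 0)"
      proof (intro allI impI)
        fix i assume i: "i < N"
        show "l i \<ge> (L - 3*s) + s * t i + (if i = j0 then s else 0) + (if i = p then D - s else 0)"
        proof (cases "i = j0")
          case True
          have "s * t i \<le> s * 2" using j0 True s0 m2 by (intro mult_left_mono) auto
          then show ?thesis using True lge i pj by auto
        next
          case ij: False
          show ?thesis
          proof (cases "t i \<ge> 4")
            case True
            have g: "l i \<ge> (t i - 2) * (2*m - t i + 2) + 2" using tlow i True by auto
            have ti: "t i \<le> T" using p i unfolding T_def by auto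
            have "0 \<le> (t i - 4) * (T - t i)" using True ti by (intro mult_nonneg_nonneg) auto
            moreover have "(t i - 2) * (2*m - t i + 2) + 2 - ((L - 3*s) + s * t i) = (t i - 4) * (T - t i) + (D - s)"
              unfolding D_def s_def by (simp add: algebra_simps)
            moreover have "i = p \<Longrightarrow> (t i - 4) * (T - t i) = 0" unfolding T_def by simp
            ultimately show ?thesis using g ij sD by (cases "i = p") auto
          next
            case False
            have "i \<noteq> p" using False T4 unfolding T_def by auto
            moreover have "s * t i \<le> s * 3" using False s0 m2 by (intro mult_left_mono) auto
            ultimately show ?thesis using ij lge i by auto
          qed
        qed
      qed
      have "(\<Sum>i<N. l i) \<ge> (\<Sum>i<N. (L - 3*s) + s * t i + (if i = j0 then s else 0) + (if i = p then D - s else 0))"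
        using per by (intro sum_mono) auto
      also have "(\<Sum>i<N. (L - 3*s) + s * t i + (if i = j0 then s else 0) + (if i = p then D - s else 0)) = n*(L - 3*s) + s * (\<Sum>i<N. t i) + s + (D - s)"
        using j0 p nN by (simp add: sum.distrib sum_distrib_left)
      finally have "m^2 \<ge> n*(L - 3*s) + s * (\<Sum>i<N. t i) + s + (D - s)" using suml by simp
      moreover have "s * (\<Sum>i<N. t i) \<ge> s * (m + 2)" using sumt s0 m2 by (intro mult_left_mono) auto
      ultimately have h: "m^2 \<ge> n*L + s*(m + 2 - 3*n) + D" by (simp add: algebra_simps)
      have key: "(n-1)*L + 2 \<le> (3*n-4)^2"
      proof (rule ccontr)
        assume A: "\<not> ?thesis"
        have "q^2 > (3*n-4)^2" using A hb by linarith
        then have "q > 3*n - 4" using q1 by (smt (verit) power_mono)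
        then have "s \<ge> m + 3*n - 6" unfolding s_def q_def by simp
        then have "s*(m + 2 - 3*n) \<ge> (m + 3*n - 6)*(m + 2 - 3*n)" using False by (intro mult_right_mono) auto
        then have "m^2 \<ge> n*L + (m + 3*n - 6)*(m + 2 - 3*n) + (4*m - 2 - L)" using h unfolding D_def by linarith
        then have "(n-1)*L \<le> 9*n^2 - 24*n + 14" by (simp add: power2_eq_square algebra_simps)
        then show False using A by (simp add: power2_eq_square algebra_simps)
      qed
      then have "(real_of_int n - 1) * real_of_int L + 2 \<le> (3*real_of_int n - 4)^2"
        by (metis (mono_tags, opaque_lifting) of_int_le_iff of_int_mult of_int_power of_int_diff of_int_numeral of_int_add of_int_1)
      then show ?thesis using realB n3 by simp
    qed
  qed
qed



lemma isqrt_ex: "\<exists>a::nat. a^2 \<le> k \<and> k < (a+1)^2"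
proof (induction k)
  case 0 then show ?case by (intro exI[of _ 0]) auto
next
  case (Suc k)
  then obtain a where a: "a^2 \<le> k" "k < (a+1)^2" by blast
  show ?case
  proof (cases "Suc k < (a+1)^2")
    case True then show ?thesis using a by (intro exI[of _ a]) auto
  next
    case False
    then have "(a+1)^2 \<le> Suc k" by simp
    moreover have "Suc k < (a+2)^2" using a(2) by (simp add: power2_eq_square)
    ultimately show ?thesis by (intro exI[of _ "a+1"]) (simp add: add.assoc)
  qed
qed

lemma Bm_ge3:
  assumes m0: "0 < m" and lm: "l < m^2" and od: "odd l" and lo: "2*m+1 \<le> l"
  shows "Bm m l \<ge> 3"
proof -
  have P: "Bm m l > 0 \<and> Bm m l mod 2 = l mod 2 \<and> int l \<le> 2*int m*int (Bm m l) - (int (Bm m l))^2"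
    using Bm_P(1)[OF m0 lm] .
  then have ob: "odd (Bm m l)" using od by (simp add: odd_iff_mod_2_eq_one)
  have "Bm m l \<noteq> 1"
  proof
    assume "Bm m l = 1"
    then have "int l \<le> 2*int m - 1" using P by simp
    then show False using lo by linarith
  qed
  then show ?thesis using ob P by presburger
qed

lemma Bm_ge4:
  assumes m0: "0 < m" and lm: "l < m^2" and ev: "even l" and lo: "4*m \<le> l + 3"
  shows "Bm m l \<ge> 4"
proof -
  have P: "Bm m l > 0 \<and> Bm m l mod 2 = l mod 2 \<and> int l \<le> 2*int m*int (Bm m l) - (int (Bm m l))^2"
    using Bm_P(1)[OF m0 lm] .
  then have eb: "even (Bm m l)" using ev by (simp add: even_iff_mod_2_eq_zero)
  have "Bm m l \<noteq> 2"
  proof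
    assume "Bm m l = 2"
    then have "int l \<le> 4*int m - 4" using P by simp
    then show False using lo by linarith
  qed
  then show ?thesis using eb P by presburger
qed

lemma witness:
  fixes n :: nat assumes n3: "n \<ge> 3"
  shows "\<exists>m ls. length ls = n \<and> sorted ls \<and> impossibly_burnable m ls \<and>
           real (ls!0) > 12*real n - 2*sqrt(30*real n - 27) - 8"
proof -
  obtain a :: nat where a: "a^2 \<le> 2*n" "2*n < (a+1)^2" using isqrt_ex by blast
  have a2: "a \<ge> 2"
  proof (rule ccontr)
    assume "\<not> a \<ge> 2"
    then have "(a+1)^2 \<le> 4" by (cases a) (auto simp: power2_eq_square)
    then show False using a n3 by linarith
  qed
  have an: "a \<le> n"
  proof (rule ccontr)
    assume "\<not> a \<le> n"
    then have "n + 1 \<le> a" by simp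
    then have "(n+1)^2 \<le> a^2" by (rule power_mono) simp
    then show False using a(1) by (simp add: power2_eq_square)
  qed
  define m where "m = 4*n - a - 2"
  define b where "b = n - a"
  define S where "S = m*(3*a-2) + 2*b"
  define Q where "Q = S div a"
  define L where "L = (if odd Q then Q else Q - 1)"
  have im: "int m = 4*int n - int a - 2" unfolding m_def using an n3 by simp
  have ib: "int b = int n - int a" unfolding b_def using an by simp
  have iS: "int S = int m * (3*int a - 2) + 2*int b" unfolding S_def using a2 by (simp add: of_nat_diff)
  have m7: "m \<ge> 7" using im an n3 by linarith
  have ia: "int a \<ge> 2" "int a \<le> int n" using a2 an by auto
  have Slo: "a*(2*m+1) \<le> S"
  proof -
    have "int a*(2*int m+1) \<le> int S"
    proof (cases "a = 2")
      case True then show ?thesis using iS im ib n3 by simp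
    next
      case False
      then have a3: "int a \<ge> 3" using a2 by simp
      have "int m * (int a - 2) \<ge> int m" using a3 m7 by (simp add: mult_le_cancel_left1 algebra_simps)
      moreover have "int S - int a*(2*int m+1) = int m * (int a - 2) + 2*int n - 3*int a"
        using iS ib by (simp add: algebra_simps)
      ultimately show ?thesis using im ia by linarith
    qed
    then have "int (a*(2*m+1)) \<le> int S" by (simp add: algebra_simps)
    then show ?thesis by (simp only: of_nat_le_iff)
  qed
  have Shi: "S \<le> a*(4*m-4)"
  proof -
    have "int a * int m \<ge> 2 * int m" using ia m7 by (simp add: mult_right_mono)
    moreover have "int a * (4*int m - 4) - int S = int a * int m + 2*int m - 4*int a - 2*int b" using iS by (simp add: algebra_simps)
    ultimately have "int S \<le> int a * (4*int m - 4)" using ib im ia by linarith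
    moreover have i4: "int (4*m-4) = 4*int m - 4" using m7 by (simp add: of_nat_diff)
    ultimately have "int S \<le> int (a*(4*m-4))" by (simp only: of_nat_mult i4)
    then show ?thesis by (simp only: of_nat_le_iff)
  qed
  have Qlo: "Q \<ge> 2*m+1" unfolding Q_def using Slo a2 by (simp add: less_eq_div_iff_mult_less_eq mult.commute)
  have Qhi: "Q \<le> 4*m-4"
  proof -
    have "S div a \<le> (a*(4*m-4)) div a" using Shi by (rule div_le_mono)
    then show ?thesis unfolding Q_def using a2 by simp
  qed
  have aQ1: "a*Q \<le> S" unfolding Q_def by (rule times_div_less_eq_dividend)
  have aQ2: "S < a + a*Q" unfolding Q_def using a2 by (intro dividend_less_times_div) simp
  have aQ: "a*Q \<le> S" "S < a*(Q+1)" using aQ1 aQ2 by (simp_all add: algebra_simps)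
  have Lodd: "odd L" and LQ: "L \<le> Q" "Q \<le> L + 1" unfolding L_def using Qlo by auto
  have Llo: "L \<ge> 2*m+1"
  proof (cases "odd Q")
    case True then show ?thesis using Qlo unfolding L_def by simp
  next
    case False
    then have "Q \<noteq> 2*m+1" by auto
    then have "Q \<ge> 2*m+2" using Qlo by simp
    then show ?thesis using False unfolding L_def by simp
  qed
  have Lhi: "L + 2 \<le> 4*m - 2" using Qhi LQ m7 by linarith
  have aL: "a*L \<le> S" using le_trans[OF mult_le_mono2[OF LQ(1)] aQ(1)] .
  have aL2: "S < a*L + 2*a"
  proof -
    have "a*(Q+1) \<le> a*(L+2)" by (rule mult_le_mono2) (use LQ in linarith)
    then show ?thesis using aQ(2) by (simp add: algebra_simps)
  qed
  have eS: "even S \<longleftrightarrow> even a"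
  proof -
    have "even (int S) \<longleftrightarrow> even (int a)" unfolding iS im by (simp add: even_mult_iff)
    then show ?thesis by simp
  qed
  have eaL: "even (a*L) \<longleftrightarrow> even a" using Lodd by simp
  have "even (S + a*L)" using eS eaL by simp
  moreover have "S - a*L = (S + a*L) - 2*(a*L)" using aL by (simp add: mult.commute)
  ultimately have Sev: "even (S - a*L)" by (metis dvd_diff_nat dvd_triv_left)
  define r where "r = (S - a*L) div 2"
  have r2: "2*r = S - a*L" unfolding r_def using Sev by simp
  have r2': "2*r + a*L = S" using r2 aL by simp
  have ra: "r < a" using r2' aL2 by linarith
  define ls where "ls = replicate (a - r) L @ replicate r (L+2) @ replicate b (4*m-2)"
  have len: "length ls = n" unfolding ls_def b_def using ra an by simp
  have sorted: "sorted ls" unfolding ls_def using Lhi by (auto simp: sorted_append)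
  have l0: "ls!0 = L" unfolding ls_def using ra by (simp add: nth_append)
  have sumls: "sum_list ls = m^2"
  proof -
    have "sum_list ls = (a-r)*L + r*(L+2) + b*(4*m-2)" unfolding ls_def by (simp add: sum_list_replicate del: replicate.simps)
    also have "\<dots> = a*L + 2*r + b*(4*m-2)" using ra by (simp add: algebra_simps diff_mult_distrib)
    also have "\<dots> = S + b*(4*m-2)" using r2 aL by simp
    finally have "int (sum_list ls) = int S + int b * (4*int m - 2)" using m7 by (simp add: of_nat_diff)
    also have "\<dots> = int m * (3*int a - 2 + 4*int b)" using iS by (simp add: algebra_simps)
    also have "3*int a - 2 + 4*int b = int m" using im ib by linarith
    also have "int m * int m = (int m)^2" by (simp add: power2_eq_square)
    finally show ?thesis by (metis of_nat_eq_iff of_nat_power)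
  qed
  have m0: "0 < m" using m7 by simp
  have "7*m \<le> m*m" using m7 by (rule mult_right_mono) simp
  then have msq: "4*m - 2 < m^2" using m7 unfolding power2_eq_square by linarith
  have B1: "Bm m L \<ge> 3" using Bm_ge3[OF m0 _ Lodd Llo] msq Lhi by linarith
  have B2: "Bm m (L+2) \<ge> 3" using Bm_ge3[OF m0 _ _ _, of "L+2"] msq Lhi Lodd Llo by simp
  have B3: "Bm m (4*m-2) \<ge> 4" using Bm_ge4[OF m0 msq] m7 by simp
  have sumB: "sum_list (map (Bm m) ls) \<ge> 3*(a-r) + 3*r + 4*b"
  proof -
    have "sum_list (map (Bm m) ls) = (a-r)*Bm m L + r*Bm m (L+2) + b*Bm m (4*m-2)" unfolding ls_def by (simp add: sum_list_replicate del: replicate.simps)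
    moreover have "(a-r)*Bm m L \<ge> (a-r)*3" using B1 by simp
    moreover have "r*Bm m (L+2) \<ge> r*3" using B2 by simp
    moreover have "b*Bm m (4*m-2) \<ge> b*4" using B3 by simp
    ultimately show ?thesis by linarith
  qed
  have "3*(a-r) + 3*r + 4*b = m + 2" using ra im ib by linarith
  then have IB: "impossibly_burnable m ls" unfolding impossibly_burnable_def path_forest_def
    using len sumls sumB Llo Lhi unfolding ls_def by auto
  have real_part: "real L > 12*real n - 2*sqrt(30*real n - 27) - 8"
  proof -
    have h1: "3*(real a)^2 + 6*real n - 4 \<le> 2*real a*sqrt(30*real n-27)"
    proof (rule realW)
      show "real a \<ge> 2" using a2 by simp
      show "(real a)^2 \<le> 2*real n" using a(1) by (metis of_nat_le_iff of_nat_mult of_nat_numeral of_nat_power)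
      have "2*n \<le> a^2 + 2*a" using a(2) by (simp add: power2_eq_square)
      then show "2*real n \<le> (real a)^2 + 2*real a" by (metis of_nat_le_iff of_nat_mult of_nat_numeral of_nat_power of_nat_add)
    qed
    have "int S < int a * int L + 2 * int a" using aL2 by (metis of_nat_less_iff of_nat_mult of_nat_add of_nat_numeral)
    then have "int a * int L > 12*int n*int a - 6*int n - 3*int a^2 - 8*int a + 4" using iS im ib by (simp add: power2_eq_square algebra_simps)
    then have h2: "real a * real L > 12*real n*real a - 6*real n - 3*(real a)^2 - 8*real a + 4"
      by (metis (mono_tags, opaque_lifting) of_int_less_iff of_int_mult of_int_power of_int_diff of_int_numeral of_int_add of_int_of_nat_eq)
    have "real a * real L > real a * (12*real n - 2*sqrt(30*real n - 27) - 8)" using h1 h2 by (simp add: algebra_simps)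
    then show ?thesis using a2 by (simp add: mult_less_cancel_left)
  qed
  show ?thesis using len sorted IB real_part l0 by (intro exI[of _ m] exI[of _ ls]) auto
qed



lemma core2:
  fixes n m L :: int and l t :: "nat \<Rightarrow> int" and N :: nat
  assumes nN: "n = int N" and n3: "n \<ge> 3" and m0: "m \<ge> 0"
  and lge: "\<forall>i<N. L \<le> l i" and L1: "L \<ge> 1"
  and suml: "(\<Sum>i<N. l i) = m^2"
  and sumt: "(\<Sum>i<N. t i) \<ge> m + 1"
  and tmax: "\<forall>i<N. t i \<le> m + 1"
  and tlow: "\<forall>i<N. 3 \<le> t i \<longrightarrow> l i \<ge> (t i - 2) * (2*m - t i + 2) + 2"
  shows "L \<le> 16*n"
proof -
  have N0: "N > 0" using nN n3 by simp
  obtain p where p: "p < N" "\<forall>i<N. t i \<le> t p" using argmax_idx[OF N0] by blast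
  define T where "T = t p"
  have sumL: "(\<Sum>i<N. l i) \<ge> n * L"
  proof -
    have "(\<Sum>i<N. l i) \<ge> (\<Sum>i<N. L)" using lge by (intro sum_mono) auto
    then show ?thesis using nN by simp
  qed
  show ?thesis
  proof (cases "m \<le> 4*n")
    case True
    have "m^2 \<le> (4*n)^2" using True m0 by (intro power_mono) auto
    then have "n * L \<le> n * (16*n)" using sumL suml by (simp add: power2_eq_square)
    then show ?thesis using n3 by (simp add: mult_le_cancel_left)
  next
    case False
    have T3: "T \<ge> 3"
    proof (rule ccontr)
      assume "\<not> T \<ge> 3"
      then have "\<forall>i<N. t i \<le> 2" using p unfolding T_def by force
      then have "(\<Sum>i<N. t i) \<le> (\<Sum>i<N. 2)" by (intro sum_mono) auto
      then show False using sumt False nN by simp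
    qed
    define q where "q = m + 2 - T"
    have Tm: "T \<le> m + 1" using tmax p unfolding T_def by auto
    have q1: "q \<ge> 1" using Tm unfolding q_def by simp
    have hb: "q^2 \<ge> (n-1)*L + 2"
    proof -
      have "l p \<ge> (T - 2) * (2*m - T + 2) + 2" using tlow p T3 unfolding T_def by auto
      moreover have "(T - 2) * (2*m - T + 2) = m^2 - q^2" unfolding q_def by (simp add: power2_eq_square algebra_simps)
      moreover have "(\<Sum>i<N. l i) \<ge> l p + (n - 1) * L" using sum_remove_lb[OF p(1) lge] nN by simp
      ultimately show ?thesis using suml by linarith
    qed
    have per: "\<forall>i<N. l i \<ge> (m + q) * t i - 2*(m+q)"
    proof (intro allI impI)
      fix i assume i: "i < N"
      show "l i \<ge> (m + q) * t i - 2*(m+q)"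
      proof (cases "t i \<ge> 3")
        case True
        have g: "l i \<ge> (t i - 2) * (2*m - t i + 2) + 2" using tlow i True by auto
        have ti: "t i \<le> T" using p i unfolding T_def by auto
        have "0 \<le> (t i - 2) * (T - t i)" using True ti by (intro mult_nonneg_nonneg) auto
        moreover have "(t i - 2) * (2*m - t i + 2) + 2 - ((m + q) * t i - 2*(m+q)) = (t i - 2) * (T - t i) + 2"
          unfolding q_def by (simp add: algebra_simps)
        ultimately show ?thesis using g by simp
      next
        case False
        have "(m + q) * t i \<le> (m + q) * 2" using False q1 m0 by (intro mult_left_mono) auto
        then show ?thesis using lge i L1 by (simp add: algebra_simps) (smt (verit))
      qed
    qed
    have "(\<Sum>i<N. l i) \<ge> (\<Sum>i<N. (m + q) * t i - 2*(m+q))" using per by (intro sum_mono) auto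
    also have "(\<Sum>i<N. (m + q) * t i - 2*(m+q)) = (m+q) * (\<Sum>i<N. t i) - n*(2*(m+q))"
      using nN by (simp add: sum_subtractf sum_distrib_left)
    finally have h1: "m^2 \<ge> (m+q) * (\<Sum>i<N. t i) - n*(2*(m+q))" using suml by simp
    have "(m+q) * (\<Sum>i<N. t i) \<ge> (m+q)*(m+1)" using sumt q1 m0 by (intro mult_left_mono) auto
    then have h2: "m^2 \<ge> (m+q)*(m+1) - n*(2*(m+q))" using h1 by linarith
    have h3: "q*(m+1-2*n) \<le> m*(2*n-1)"
    proof -
      have "(m+q)*(m+1) - n*(2*(m+q)) = m^2 + m - 2*n*m + q*(m+1-2*n)" by (simp add: power2_eq_square algebra_simps)
      moreover have "m*(2*n-1) = 2*n*m - m" by (simp add: algebra_simps)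
      ultimately show ?thesis using h2 by linarith
    qed
    have q4: "q \<le> 4*n - 3"
    proof (rule ccontr)
      assume "\<not> q \<le> 4*n - 3"
      then have "q \<ge> 4*n - 2" by simp
      then have "q*(m+1-2*n) \<ge> (4*n-2)*(m+1-2*n)" using False n3 by (intro mult_right_mono) auto
      moreover have "(4*n-2)*(m+1-2*n) - m*(2*n-1) = (2*n-1)*(m+2-4*n)" by (simp add: algebra_simps)
      moreover have "(2*n-1)*(m+2-4*n) > 0" using False n3 by (intro mult_pos_pos) auto
      ultimately show False using h3 by linarith
    qed
    have "q^2 \<le> (4*n-3)^2" using q4 q1 by (intro power_mono) auto
    then have "(n-1)*L \<le> (n-1)*(16*n) - 8*n + 7" using hb by (simp add: power2_eq_square algebra_simps)
    then have "(n-1)*L \<le> (n-1)*(16*n)" using n3 by linarith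
    then show ?thesis using n3 by (simp add: mult_le_cancel_left)
  qed
qed



lemma forest_facts:
  fixes n m :: nat and ls :: "nat list"
  assumes n3: "n \<ge> 3" and len: "length ls = n" and srt: "sorted ls" and IB: "impossibly_burnable m ls"
  shows "m \<ge> 1"
    and "\<forall>i<n. int (ls!0) \<le> int (ls!i)"
    and "int (ls!0) \<ge> 1"
    and "(\<Sum>i<n. int (ls!i)) = (int m)^2"
    and "(\<Sum>i<n. int (Bm m (ls!i))) \<ge> int m + 2"
    and "\<forall>i<n. int (Bm m (ls!i)) \<le> int m + 1"
    and "\<forall>i<n. 3 \<le> int (Bm m (ls!i)) \<longrightarrow> int (ls!i) \<ge> (int (Bm m (ls!i)) - 2) * (2*int m - int (Bm m (ls!i)) + 2) + 2"
    and "\<forall>i<n. int (ls!i) \<le> 2*int m*int (Bm m (ls!i)) - (int (Bm m (ls!i)))^2"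
proof -
  have pos: "\<forall>l\<in>set ls. 1 \<le> l" and sl: "sum_list ls = m^2" and sB: "sum_list (map (Bm m) ls) > m"
    using IB unfolding impossibly_burnable_def path_forest_def by auto
  have sl': "(\<Sum>i<n. ls!i) = m^2" using sl len by (simp add: sum_list_sum_nth atLeast0LessThan)
  have sB': "(\<Sum>i<n. Bm m (ls!i)) > m" using sB len by (simp add: sum_list_sum_nth atLeast0LessThan)
  have pos': "\<forall>i<n. 1 \<le> ls!i" using pos len by auto
  have isl: "(\<Sum>i<n. int (ls!i)) = (int m)^2" using sl' by (metis of_nat_sum of_nat_power)
  show "(\<Sum>i<n. int (ls!i)) = (int m)^2" by (rule isl)
  have lt: "\<forall>i<n. ls!i < m^2"
  proof (intro allI impI)
    fix i assume i: "i < n"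
    have "(\<Sum>j<n. int (ls!j)) \<ge> int (ls!i) + (int n - 1) * 1" using sum_remove_lb[OF i, of 1 "\<lambda>j. int (ls!j)"] pos' by auto
    then have "(\<Sum>j<n. int (ls!j)) \<ge> int (ls!i) + (int n - 1)" by simp
    moreover have "int n \<ge> 3" using n3 by simp
    ultimately have "int (ls!i) < (int m)^2" using isl by linarith
    then show "ls!i < m^2" by (metis of_nat_less_iff of_nat_power)
  qed
  have m1: "m \<ge> 1"
  proof (rule ccontr)
    assume "\<not> m \<ge> 1"
    then have "m = 0" by simp
    moreover have "ls!0 < m^2" using lt n3 by simp
    ultimately show False by simp
  qed
  show "m \<ge> 1" by (rule m1)
  have m0: "0 < m" using m1 by simp
  show "\<forall>i<n. int (ls!0) \<le> int (ls!i)" using sorted_nth_mono[OF srt] len by simp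
  show "int (ls!0) \<ge> 1" using pos' n3 by simp
  show "\<forall>i<n. int (Bm m (ls!i)) \<le> int m + 1" using Bm_P(2)[OF m0] lt by (metis of_nat_1 of_nat_add of_nat_le_iff)
  show "\<forall>i<n. 3 \<le> int (Bm m (ls!i)) \<longrightarrow> int (ls!i) \<ge> (int (Bm m (ls!i)) - 2) * (2*int m - int (Bm m (ls!i)) + 2) + 2"
    using Bm_lower[OF m0] lt by simp
  show "\<forall>i<n. int (ls!i) \<le> 2*int m*int (Bm m (ls!i)) - (int (Bm m (ls!i)))^2"
    using Bm_P(1)[OF m0] lt by simp
  have ev: "even ((\<Sum>i<n. int (Bm m (ls!i))) - (\<Sum>i<n. int (ls!i)))"
  proof -
    have "\<forall>i<n. even (int (Bm m (ls!i)) - int (ls!i))"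
    proof (intro allI impI)
      fix i assume "i < n"
      then have "Bm m (ls!i) mod 2 = ls!i mod 2" using Bm_P(1)[OF m0] lt by simp
      then have "even (Bm m (ls!i)) = even (ls!i)" by (simp add: even_iff_mod_2_eq_zero)
      then show "even (int (Bm m (ls!i)) - int (ls!i))" by simp
    qed
    then have "even (\<Sum>i<n. int (Bm m (ls!i)) - int (ls!i))" by (intro dvd_sum) auto
    then show ?thesis by (simp add: sum_subtractf)
  qed
  have ev2: "even ((int m)^2 - int m)"
  proof -
    have "(int m)^2 - int m = int m * (int m - 1)" by (simp add: power2_eq_square algebra_simps)
    then show ?thesis by simp
  qed
  have "even ((\<Sum>i<n. int (Bm m (ls!i))) - int m)"
  proof -
    have "(\<Sum>i<n. int (Bm m (ls!i))) - int m = ((\<Sum>i<n. int (Bm m (ls!i))) - (\<Sum>i<n. int (ls!i))) + ((int m)^2 - int m)"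
      using isl by simp
    then show ?thesis using ev ev2 by simp
  qed
  moreover have "(\<Sum>i<n. int (Bm m (ls!i))) > int m" using sB' by (metis of_nat_less_iff of_nat_sum)
  ultimately show "(\<Sum>i<n. int (Bm m (ls!i))) \<ge> int m + 2" using evgap by simp
qed

lemma part1:
  fixes n m :: nat and ls :: "nat list"
  assumes n3: "n \<ge> 3" and len: "length ls = n" and srt: "sorted ls" and IB: "impossibly_burnable m ls"
  and j0: "j0 < n" "Bm m (ls ! j0) \<le> 2"
  shows "real (ls ! 0) \<le> 12 * real n - 2 * sqrt (30 * real n - 27) - 8"
proof -
  note ff = forest_facts[OF n3 len srt IB]
  have m2: "m \<ge> 2"
  proof (rule ccontr)
    assume "\<not> m \<ge> 2"
    then have "m = 1" using ff(1) by simp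
    then have "(\<Sum>i<n. int (ls!i)) = 1" using ff(4) by simp
    moreover have "(\<Sum>i<n. int (ls!i)) \<ge> (\<Sum>i<n. 1)" using ff(2) ff(3) by (intro sum_mono) force
    ultimately show False using n3 by simp
  qed
  have L4: "int (ls!0) \<le> 4*int m - 4"
  proof -
    have a: "int (ls!0) \<le> int (ls!j0)" using ff(2) j0 by simp
    have b: "int (ls!j0) \<le> 2*int m*int (Bm m (ls!j0)) - (int (Bm m (ls!j0)))^2" using ff(8) j0 by simp
    have "Bm m (ls!j0) = 0 \<or> Bm m (ls!j0) = 1 \<or> Bm m (ls!j0) = 2" using j0 by auto
    then show ?thesis using a b m2 by (auto simp: power2_eq_square)
  qed
  have "real_of_int (int (ls!0)) \<le> 12 * real_of_int (int n) - 2 * sqrt (30 * real_of_int (int n) - 27) - 8"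
  proof (rule core1[where N = n and t = "\<lambda>i. int (Bm m (ls!i))" and l = "\<lambda>i. int (ls!i)" and m = "int m"])
    show "int n = int n" by simp
    show "int n \<ge> 3" using n3 by simp
    show "\<forall>i<n. int (ls!0) \<le> int (ls!i)" using ff(2) .
    show "int (ls!0) \<ge> 1" using ff(3) .
    show "(\<Sum>i<n. int (ls!i)) = (int m)^2" using ff(4) .
    show "(\<Sum>i<n. int (Bm m (ls!i))) \<ge> int m + 2" using ff(5) .
    show "\<forall>i<n. int (Bm m (ls!i)) \<le> int m + 1" using ff(6) .
    show "\<forall>i<n. 3 \<le> int (Bm m (ls!i)) \<longrightarrow> int (ls!i) \<ge> (int (Bm m (ls!i)) - 2) * (2*int m - int (Bm m (ls!i)) + 2) + 2" using ff(7) .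
    show "j0 < n" using j0 by simp
    show "int (Bm m (ls!j0)) \<le> 2" using j0 by simp
    show "int (ls!0) \<le> 4*int m - 4" using L4 .
  qed
  then show ?thesis by simp
qed

lemma bound16:
  fixes n m :: nat and ls :: "nat list"
  assumes n3: "n \<ge> 3" and len: "length ls = n" and srt: "sorted ls" and IB: "impossibly_burnable m ls"
  shows "ls ! 0 \<le> 16 * n"
proof -
  note ff = forest_facts[OF n3 len srt IB]
  have "int (ls!0) \<le> 16 * int n"
  proof (rule core2[where N = n and t = "\<lambda>i. int (Bm m (ls!i))" and l = "\<lambda>i. int (ls!i)" and m = "int m"])
    show "int n = int n" by simp
    show "int n \<ge> 3" using n3 by simp
    show "int m \<ge> 0" by simp
    show "\<forall>i<n. int (ls!0) \<le> int (ls!i)" using ff(2) .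
    show "int (ls!0) \<ge> 1" using ff(3) .
    show "(\<Sum>i<n. int (ls!i)) = (int m)^2" using ff(4) .
    show "(\<Sum>i<n. int (Bm m (ls!i))) \<ge> int m + 1" using ff(5) by simp
    show "\<forall>i<n. int (Bm m (ls!i)) \<le> int m + 1" using ff(6) .
    show "\<forall>i<n. 3 \<le> int (Bm m (ls!i)) \<longrightarrow> int (ls!i) \<ge> (int (Bm m (ls!i)) - 2) * (2*int m - int (Bm m (ls!i)) + 2) + 2" using ff(7) .
  qed
  then show ?thesis by simp
qed

theorem mainTheorem4:
  fixes n m :: nat and ls :: "nat list"
  assumes "n \<ge> 3" and "length ls = n" and "sorted ls" and "impossibly_burnable m ls"
  shows "((\<exists>i<n. Bm m (ls ! i) \<le> 2) \<longrightarrow>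
           real (ls ! 0) \<le> 12 * real n - 2 * sqrt (30 * real n - 27) - 8)
         \<and> (ls ! 0 = Mn n \<longrightarrow> (\<forall>i<n. 3 \<le> Bm m (ls ! i)))"
proof (intro conjI impI allI)
  show "real (ls ! 0) \<le> 12 * real n - 2 * sqrt (30 * real n - 27) - 8" if "\<exists>i<n. Bm m (ls ! i) \<le> 2"
    using that part1[OF assms] by blast
next
  fix i assume eq: "ls ! 0 = Mn n" and i: "i < n"
  show "3 \<le> Bm m (ls ! i)"
  proof (rule ccontr)
    assume "\<not> 3 \<le> Bm m (ls ! i)"
    then have h: "real (ls ! 0) \<le> 12 * real n - 2 * sqrt (30 * real n - 27) - 8" using part1[OF assms i] by simp
    define P where "P = (\<lambda>x. \<exists>m ls. length ls = n \<and> sorted ls \<and> impossibly_burnable m ls \<and> x = ls ! 0)"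
    obtain m' ls' where w: "length ls' = n" "sorted ls'" "impossibly_burnable m' ls'"
      "real (ls'!0) > 12*real n - 2*sqrt(30*real n - 27) - 8" using witness[OF assms(1)] by blast
    have Pw: "P (ls'!0)" unfolding P_def using w by blast
    have bnd: "\<And>y. P y \<Longrightarrow> y \<le> 16*n" unfolding P_def using bound16 assms(1) by blast
    have "ls'!0 \<le> Mn n" unfolding Mn_def P_def[symmetric] using Greatest_le_nat[of P, OF Pw bnd] .
    then have "real (ls'!0) \<le> real (ls!0)" using eq by simp
    then show False using h w(4) by linarith
  qed
qed


end
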